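(* Let $n\geq 3$ and $m\geq 3$ be integers and $Q(z)=\sum_{i=0}^{m}\binom{m}{i}\frac{(-1)^{i}}{n+m+1-i} z^{n+m+1-i}$, $P(z)=Q(z)+1$. Then $Q(1)$ is not an integer. In particular, $P(1)\neq -1$. *)

theory Defs
  imports Complex_Main
begin

definition Qpoly :: "nat \<Rightarrow> nat \<Rightarrow> complex \<Rightarrow> complex" where
  "Qpoly n m z = (\<Sum>i=0..m. of_nat (m choose i) * (-1) ^ i / of_nat (n + m + 1 - i) * z ^ (n + m + 1 - i))"

definition Ppoly :: "nat \<Rightarrow> nat \<Rightarrow> complex \<Rightarrow> complex" where
  "Ppoly n m z = Qpoly n m z + 1"

end

theory Submission imports Defs begin

lemma alg: fixes A B a f M :: real
  assumes "A > 0" "B > 0" "a > 0" "A * (a + M + 1) = a * B"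
  shows "f / A - f / B = f * (M+1) / (a * B)"
proof -
  have "f / A - f / B = f * (B - A) / (A * B)" using assms by (simp add: field_simps)
  also have "\<dots> = f * (a*(B - A)) / (a * A * B)" using assms by simp
  also have "a*(B-A) = A * (M+1)" using assms(4) by (simp add: algebra_simps)
  finally show ?thesis using assms by simp
qed

lemma fsum: "(a::real) > 0 \<Longrightarrow> (\<Sum>j\<le>m. real (m choose j) * (-1)^j / (a + real j)) = fact m / (\<Prod>k\<le>m. (a + real k))"
proof (induction m arbitrary: a)
  case 0 then show ?case by simp
next
  case (Suc m)
  have pa: "(\<Prod>k\<le>m. (a + real k)) > 0" using Suc.prems by (intro prod_pos) auto
  have pb: "(\<Prod>k\<le>m. (a + 1 + real k)) > 0" using Suc.prems by (intro prod_pos) auto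
  have e1: "(\<Sum>j\<le>Suc m. real (Suc m choose j) * (-1)^j / (a + real j))
      = (\<Sum>j\<le>m. real (Suc m choose Suc j) * (-1)^Suc j / (a + real (Suc j))) + 1 / a"
    by (subst sum.atMost_Suc_shift) simp
  have e2: "\<dots> = (\<Sum>j\<le>m. real (m choose j) * (-1)^Suc j / (a + real (Suc j)))
                 + ((\<Sum>j\<le>m. real (m choose Suc j) * (-1)^Suc j / (a + real (Suc j))) + 1/a)"
    by (simp only: sum.distrib[symmetric] add.assoc[symmetric], rule arg_cong[where f="\<lambda>x. x + 1/a"], rule sum.cong, simp_all add: add_divide_distrib diff_divide_distrib ring_distribs)
  have e3: "(\<Sum>j\<le>m. real (m choose Suc j) * (-1)^Suc j / (a + real (Suc j))) + 1/a
       = (\<Sum>j\<le>Suc m. real (m choose j) * (-1)^j / (a + real j))"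
    by (subst sum.atMost_Suc_shift) simp
  have e4: "(\<Sum>j\<le>Suc m. real (m choose j) * (-1)^j / (a + real j)) = (\<Sum>j\<le>m. real (m choose j) * (-1)^j / (a + real j))"
    by simp
  have e5: "(\<Sum>j\<le>m. real (m choose j) * (-1)^Suc j / (a + real (Suc j)))
      = - (\<Sum>j\<le>m. real (m choose j) * (-1)^j / ((a+1) + real j))"
    by (simp add: sum_negf[symmetric] add_ac)
  have e: "(\<Sum>j\<le>Suc m. real (Suc m choose j) * (-1)^j / (a + real j))
     = fact m / (\<Prod>k\<le>m. (a + real k)) - fact m / (\<Prod>k\<le>m. (a + 1 + real k))"
    using e1 e2 e3 e4 e5 Suc.IH[of a] Suc.IH[of "a+1"] Suc.prems by simp
  have p1: "(\<Prod>k\<le>Suc m. (a + real k)) = (\<Prod>k\<le>m. (a + real k)) * (a + real (Suc m))"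
    by simp
  have p2: "(\<Prod>k\<le>Suc m. (a + real k)) = a * (\<Prod>k\<le>m. (a + 1 + real k))"
    by (subst prod.atMost_Suc_shift) (simp add: add_ac)
  show ?case unfolding e
  proof -
    let ?A = "(\<Prod>k\<le>m. (a + real k))" and ?B = "(\<Prod>k\<le>m. (a + 1 + real k))"
    have "?A * (a + real (Suc m)) = a * ?B" using p1 p2 by simp
    then show "fact m / ?A - fact m / ?B = fact (Suc m) / (\<Prod>k\<le>Suc m. (a + real k))"
      using alg[OF pa pb Suc.prems, of "real m" "fact m"] p2 by (simp add: add_ac)
  qed
qed

lemma sgn_rev: "i \<le> m \<Longrightarrow> ((-1::real)^(m-i)) = (-1)^m * (-1)^i"
proof -
  assume "i \<le> m"
  then have "(-1::real)^m = (-1)^(m-i) * (-1)^i" by (simp flip: power_add)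
  then have "(-1::real)^m * (-1)^i = (-1)^(m-i) * ((-1)^i*(-1)^i)" by simp
  also have "(-1::real)^i*(-1)^i = 1" by (simp flip: power_add)
  finally show ?thesis by simp
qed

lemma Qval: "Qpoly n m 1 = complex_of_real ((-1)^m * (\<Sum>j\<le>m. real (m choose j) * (-1)^j / (real (n+1) + real j)))"
proof -
  have "Qpoly n m 1 = (\<Sum>i=0..m. complex_of_real (real (m choose i) * (-1) ^ i / real (n + m + 1 - i)))"
    unfolding Qpoly_def by simp
  also have "\<dots> = complex_of_real (\<Sum>i=0..m. real (m choose i) * (-1) ^ i / real (n + m + 1 - i))"
    by simp
  also have "(\<Sum>i=0..m. real (m choose i) * (-1) ^ i / real (n + m + 1 - i))
     = (\<Sum>i=0..m. real (m choose (m - i)) * (-1) ^ (m-i) / real (n + m + 1 - (m-i)))"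
    by (subst sum.atLeastAtMost_rev) simp
  also have "\<dots> = (\<Sum>i=0..m. (-1)^m * (real (m choose i) * (-1) ^ i / (real (n+1) + real i)))"
    by (rule sum.cong) (auto simp: sgn_rev binomial_symmetric[symmetric] of_nat_diff algebra_simps)
  also have "\<dots> = (-1)^m * (\<Sum>j\<le>m. real (m choose j) * (-1)^j / (real (n+1) + real j))"
    by (simp add: sum_distrib_left atLeast0AtMost)
  finally show ?thesis .
qed

lemma fact_lt: "(a::real) > 1 \<Longrightarrow> fact m < (\<Prod>k\<le>m. (a + real k))"
proof (induction m)
  case 0 then show ?case by simp
next
  case (Suc m)
  have "fact (Suc m) = (real m + 1) * fact m" by simp
  also have "\<dots> < (a + real (Suc m)) * (\<Prod>k\<le>m. (a + real k))"
    using Suc by (intro mult_strict_mono) auto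
  finally show ?case by (simp add: mult.commute)
qed

theorem lemma2p4:
  fixes n m :: nat
  assumes "n \<ge> 3" and "m \<ge> 3"
  shows "Qpoly n m 1 \<notin> \<int> \<and> Ppoly n m 1 \<noteq> -1"
proof -
  define a where "a = real (n+1)"
  have a1: "a > 1" using assms unfolding a_def by simp
  define S where "S = (\<Sum>j\<le>m. real (m choose j) * (-1)^j / (a + real j))"
  have pp: "(\<Prod>k\<le>m. (a + real k)) > 0" using a1 by (intro prod_pos) auto
  have S: "S = fact m / (\<Prod>k\<le>m. (a + real k))" unfolding S_def using fsum a1 by simp
  have S0: "S > 0" unfolding S using pp by simp
  have S1: "S < 1" unfolding S using pp fact_lt[OF a1, of m] by simp
  have Q: "Qpoly n m 1 = complex_of_real ((-1)^m * S)" using Qval unfolding S_def a_def .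
  have ab: "0 < \<bar>(-1)^m * S\<bar>" "\<bar>(-1)^m * S\<bar> < 1" using S0 S1 by (simp_all add: abs_mult)
  have nz: "Qpoly n m 1 \<notin> \<int>"
  proof
    assume "Qpoly n m 1 \<in> \<int>"
    then obtain k where k: "Qpoly n m 1 = of_int k" by (auto elim: Ints_cases)
    then have "(-1)^m * S = real_of_int k" unfolding Q
      by (metis Re_complex_of_real of_real_of_int_eq)
    then have "0 < \<bar>real_of_int k\<bar>" "\<bar>real_of_int k\<bar> < 1" using ab by simp_all
    then have "0 < \<bar>k\<bar>" "\<bar>k\<bar> < 1" by linarith+
    then show False by linarith
  qed
  moreover have "Ppoly n m 1 \<noteq> -1"
  proof
    assume "Ppoly n m 1 = -1"
    then have "Qpoly n m 1 = -2" unfolding Ppoly_def by (simp add: eq_neg_iff_add_eq_0 add.commute)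
    then have "Qpoly n m 1 \<in> \<int>" by simp
    with nz show False by simp
  qed
  ultimately show ?thesis by simp
qed

end
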